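(* Let $\epsilon\in\mathbb{Z}_2^*$, $\lambda\in\mathcal{O}_D$ and $t\ge2$ an integer. If $r\in\mathcal{O}_D$ satisfies $j+ij=r(j+ij)\bar r+\epsilon2^t\lambda(j+ij)\bar\lambda$, or satisfies $i+j=r(i+j)\bar r+\epsilon2^t\lambda(i+j)\bar\lambda$, then $1-r\in i\mathcal{O}_D$.
   Context: $D=\left(\frac{2,5}{\mathbb{Q}_2}\right)$ is the quaternion division algebra over $\mathbb{Q}_2$ with basis $1,i,j,ij$, $i^2=2$, $j^2=5$, $ij=-ji$; $q\mapsto\bar q$ is the canonical involution and $\mathcal{O}_D$ the maximal order (equal to $\mathbb{Z}_2\oplus\mathbb{Z}_2\omega\oplus\mathbb{Z}_2i\oplus\mathbb{Z}_2i\omega$, $\omega=(1+j)/2$). *)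

theory Defs
  imports Main
begin

text \<open>An element of Z_2 is a compatible sequence (x n) with x n in {0..<2^n} and
  x n = x (Suc n) mod 2^n; this is the standard model  Z_2 = lim Z/2^n Z.\<close>

typedef padic2 = "{x :: nat \<Rightarrow> int. \<forall>n. x n = x (Suc n) mod 2 ^ n}"
  morphisms seq Padic2
  by (rule exI[of _ "\<lambda>_. 0"]) simp

setup_lifting type_definition_padic2

lemma compat_mod:
  fixes x :: "nat \<Rightarrow> int"
  assumes "\<forall>n. x n = x (Suc n) mod 2 ^ n"
  shows "x n = x n mod 2 ^ n"
proof -
  have "x n = x (Suc n) mod 2 ^ n" using assms by blast
  then show ?thesis by simp
qed

lemma compat_op:
  fixes x :: "nat \<Rightarrow> int"
  assumes "\<forall>n. x n = x (Suc n) mod 2 ^ n"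
  shows "x (Suc n) mod 2 ^ n = x n"
  using assms by metis

lemma pow2_dvd_Suc: "(2::int) ^ n dvd 2 ^ Suc n" by simp

lemma closed_plus:
  fixes x y :: "nat \<Rightarrow> int"
  assumes x: "\<forall>n. x n = x (Suc n) mod 2 ^ n" and y: "\<forall>n. y n = y (Suc n) mod 2 ^ n"
  shows "\<forall>n. (x n + y n) mod 2 ^ n = (x (Suc n) + y (Suc n)) mod 2 ^ Suc n mod 2 ^ n"
proof
  fix n
  have "(x (Suc n) + y (Suc n)) mod 2 ^ Suc n mod 2 ^ n = (x (Suc n) + y (Suc n)) mod 2 ^ n"
    by (simp add: mod_mod_cancel)
  also have "\<dots> = (x (Suc n) mod 2^n + y (Suc n) mod 2^n) mod 2 ^ n"
    by (simp add: mod_simps)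
  also have "\<dots> = (x n + y n) mod 2 ^ n" using x y by metis
  finally show "(x n + y n) mod 2 ^ n = (x (Suc n) + y (Suc n)) mod 2 ^ Suc n mod 2 ^ n" by simp
qed

lemma closed_uminus:
  fixes x :: "nat \<Rightarrow> int"
  assumes x: "\<forall>n. x n = x (Suc n) mod 2 ^ n"
  shows "\<forall>n. (- x n) mod 2 ^ n = (- x (Suc n)) mod 2 ^ Suc n mod 2 ^ n"
proof
  fix n
  have "(- x (Suc n)) mod 2 ^ Suc n mod 2 ^ n = (- x (Suc n)) mod 2 ^ n"
    by (simp add: mod_mod_cancel)
  also have "\<dots> = (- (x (Suc n) mod 2^n)) mod 2 ^ n"
    by (simp add: mod_simps)
  also have "\<dots> = (- x n) mod 2 ^ n" using x by metis
  finally show "(- x n) mod 2 ^ n = (- x (Suc n)) mod 2 ^ Suc n mod 2 ^ n" by simp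
qed

lemma closed_times:
  fixes x y :: "nat \<Rightarrow> int"
  assumes x: "\<forall>n. x n = x (Suc n) mod 2 ^ n" and y: "\<forall>n. y n = y (Suc n) mod 2 ^ n"
  shows "\<forall>n. (x n * y n) mod 2 ^ n = (x (Suc n) * y (Suc n)) mod 2 ^ Suc n mod 2 ^ n"
proof
  fix n
  have "(x (Suc n) * y (Suc n)) mod 2 ^ Suc n mod 2 ^ n = (x (Suc n) * y (Suc n)) mod 2 ^ n"
    by (simp add: mod_mod_cancel)
  also have "\<dots> = (x (Suc n) mod 2^n * (y (Suc n) mod 2^n)) mod 2 ^ n"
    by (simp add: mod_simps)
  also have "\<dots> = (x n * y n) mod 2 ^ n" using x y by metis
  finally show "(x n * y n) mod 2 ^ n = (x (Suc n) * y (Suc n)) mod 2 ^ Suc n mod 2 ^ n" by simp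
qed

lemma padic_aux1: "((a*b) mod m * c) mod m = (a * ((b*c) mod m)) mod (m::int)"
  by (simp add: mod_mult_left_eq mod_mult_right_eq mult.assoc)
lemma padic_aux2: "((a+b) mod m + c) mod m = (a + ((b+c) mod m)) mod (m::int)"
  by (simp add: mod_add_left_eq mod_add_right_eq add.assoc)
lemma padic_aux3: "((- a) mod m + a) mod m = (0::int)"
  by (simp add: mod_add_left_eq)
lemma padic_aux4: "((a+b) mod m * c) mod m = ((a*c) mod m + (b*c) mod m) mod (m::int)"
  by (simp add: mod_mult_left_eq mod_add_eq distrib_right)
lemma padic_aux5: "((1 mod m) * a) mod m = a mod (m::int)"
  by (simp add: mod_mult_left_eq)

instantiation padic2 :: comm_ring_1
begin

lift_definition zero_padic2 :: padic2 is "\<lambda>_. 0" by simp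
lift_definition one_padic2 :: padic2 is "\<lambda>n. 1 mod 2 ^ n"
  by (simp add: mod_mod_cancel)
lift_definition plus_padic2 :: "padic2 \<Rightarrow> padic2 \<Rightarrow> padic2"
  is "\<lambda>x y n. (x n + y n) mod 2 ^ n" using closed_plus by blast
lift_definition uminus_padic2 :: "padic2 \<Rightarrow> padic2"
  is "\<lambda>x n. (- x n) mod 2 ^ n" using closed_uminus by blast
lift_definition times_padic2 :: "padic2 \<Rightarrow> padic2 \<Rightarrow> padic2"
  is "\<lambda>x y n. (x n * y n) mod 2 ^ n" using closed_times by blast
definition minus_padic2 :: "padic2 \<Rightarrow> padic2 \<Rightarrow> padic2" where
  "minus_padic2 x y = x + - y"

instance
proof
  fix a b c :: padic2
  show "a * b * c = a * (b * c)"
    by transfer (simp (no_asm) add: fun_eq_iff padic_aux1)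
  show "a * b = b * a"
    by transfer (simp (no_asm) add: fun_eq_iff mult.commute)
  show "1 * a = a"
  proof transfer
    fix x :: "nat \<Rightarrow> int"
    assume x: "\<forall>n. x n = x (Suc n) mod 2 ^ n"
    show "(\<lambda>n. 1 mod 2 ^ n * x n mod 2 ^ n) = x"
    proof
      fix n
      have "x n mod 2 ^ n = x n" using compat_mod[OF x, of n] by simp
      then show "1 mod 2 ^ n * x n mod 2 ^ n = x n" using padic_aux5[of "2 ^ n" "x n"] by (simp only:)
    qed
  qed
  show "a + b + c = a + (b + c)"
    by transfer (simp (no_asm) add: fun_eq_iff padic_aux2)
  show "a + b = b + a"
    by transfer (simp (no_asm) add: fun_eq_iff add.commute)
  show "0 + a = a"
  proof transfer
    fix x :: "nat \<Rightarrow> int"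
    assume x: "\<forall>n. x n = x (Suc n) mod 2 ^ n"
    show "(\<lambda>n. (0 + x n) mod 2 ^ n) = x"
    proof
      fix n
      have "x n mod 2 ^ n = x n" using compat_mod[OF x, of n] by simp
      then show "(0 + x n) mod 2 ^ n = x n" by (simp only: add_0_left)
    qed
  qed
  show "- a + a = 0"
    by transfer (simp (no_asm) add: fun_eq_iff padic_aux3)
  show "a - b = a + - b"
    by (simp add: minus_padic2_def)
  show "(a + b) * c = a * c + b * c"
    by transfer (simp (no_asm) add: fun_eq_iff padic_aux4)
  show "(0::padic2) \<noteq> 1"
  proof transfer
    have "(\<lambda>_. 0::int) 1 \<noteq> (\<lambda>n. 1 mod 2 ^ n) (1::nat)" by simp
    then show "(\<lambda>_. 0::int) \<noteq> (\<lambda>n. 1 mod 2 ^ n)" by metis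
  qed
qed
end

text \<open>O_D = Z_2 + Z_2 \<omega> + Z_2 i + Z_2 i\<omega>, \<omega> = (1+j)/2, with \<omega>^2 = \<omega> + 1, i^2 = 2,
  i y = \<sigma>(y) i for y in Z_2[\<omega>], where \<sigma>(a + b\<omega>) = (a+b) - b\<omega>.
  The element  OD a b c d  stands for  a + b\<omega> + c i + d i\<omega> = (a + b\<omega>) + i (c + d\<omega>).\<close>

datatype OD = OD (c1: padic2) (cw: padic2) (ci: padic2) (ciw: padic2)

text \<open>For x = x1 + i x2, y = y1 + i y2:  x y = (x1 y1 + 2 \<sigma>(x2) y2) + i(\<sigma>(x1) y2 + x2 y1).\<close>

definition wmul :: "padic2 \<times> padic2 \<Rightarrow> padic2 \<times> padic2 \<Rightarrow> padic2 \<times> padic2" where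
  "wmul p q = (case p of (a, b) \<Rightarrow> case q of (c, d) \<Rightarrow> (a*c + b*d, a*d + b*c + b*d))"

definition wsig :: "padic2 \<times> padic2 \<Rightarrow> padic2 \<times> padic2" where
  "wsig p = (case p of (a, b) \<Rightarrow> (a + b, - b))"

instantiation OD :: "{zero, one, plus, minus, uminus, times}"
begin
definition "0 = OD 0 0 0 0"
definition "1 = OD 1 0 0 0"
definition "x + y = OD (c1 x + c1 y) (cw x + cw y) (ci x + ci y) (ciw x + ciw y)"
definition "x - y = OD (c1 x - c1 y) (cw x - cw y) (ci x - ci y) (ciw x - ciw y)"
definition "- x = OD (- c1 x) (- cw x) (- ci x) (- ciw x)"
definition "x * y =
  (let x1 = (c1 x, cw x); x2 = (ci x, ciw x); y1 = (c1 y, cw y); y2 = (ci y, ciw y);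
       p = wmul x1 y1; q = wmul (wsig x2) y2;
       u = wmul (wsig x1) y2; v = wmul x2 y1
   in OD (fst p + 2 * fst q) (snd p + 2 * snd q) (fst u + fst v) (snd u + snd v))"
instance ..
end

definition scal :: "padic2 \<Rightarrow> OD" where "scal a = OD a 0 0 0"

definition qi :: OD where "qi = OD 0 0 1 0"
definition qomega :: OD where "qomega = OD 0 1 0 0"
definition qj :: OD where "qj = OD (-1) 2 0 0"       (* j = 2\<omega> - 1 *)

definition qconj :: "OD \<Rightarrow> OD" where
  "qconj x = OD (c1 x + cw x) (- cw x) (- ci x) (- ciw x)"

definition unit2 :: "padic2 \<Rightarrow> bool" where "unit2 e \<longleftrightarrow> (\<exists>d. e * d = 1)"

end

theory Submission imports Defs "HOL-Library.Numeral_Type" begin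

definition H :: "padic2 \<Rightarrow> 2" where "H x = of_int (seq x 1)"
lemma of_int_mod2: "(of_int (z mod 2) :: 2) = of_int z"
  by (simp add: bit0.of_int_eq)
lemma H_add[simp]: "H (x + y) = H x + H y"
  unfolding H_def by (simp only: plus_padic2.rep_eq power_one_right of_int_mod2 of_int_add)
lemma H_mult[simp]: "H (x * y) = H x * H y"
  unfolding H_def by (simp only: times_padic2.rep_eq power_one_right of_int_mod2 of_int_mult)
lemma H_uminus[simp]: "H (- x) = - H x"
  unfolding H_def by (simp only: uminus_padic2.rep_eq power_one_right of_int_mod2 of_int_minus)
lemma H_minus[simp]: "H (x - y) = H x - H y"
  by (simp only: minus_padic2_def H_add H_uminus diff_conv_add_uminus)
lemma H_0[simp]: "H 0 = 0" unfolding H_def by (simp only: zero_padic2.rep_eq of_int_0)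
lemma H_1[simp]: "H 1 = 1" unfolding H_def by (simp only: one_padic2.rep_eq power_one_right of_int_mod2 of_int_1)
lemma H_pow[simp]: "H (x ^ n) = H x ^ n" by (induct n) auto
lemma H_of_nat[simp]: "H (of_nat n) = of_nat n" by (induct n) auto
lemma H_numeral[simp]: "H (numeral w) = numeral w"
  using H_of_nat[of "numeral w"] by simp
lemma two2[simp]: "(2::2) = 0" by simp

lemma ex2: "(x::2) = 0 \<or> x = 1"
proof (cases x)
  case (of_int z)
  have "z mod 2 = 0 \<or> z mod 2 = 1" by arith
  moreover have "x = of_int (z mod 2)" using of_int of_int_mod2 by metis
  ultimately show ?thesis by (metis of_int_0 of_int_1)
qed

lemma seq_compat: "\<forall>n. seq x n = seq x (Suc n) mod 2 ^ n"
  using seq[of x] by blast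

lemma seq_mod: "seq x (n+k) mod 2^n = seq x n"
proof (induct k)
  case 0 then show ?case using compat_mod[OF seq_compat[of x], of n] by (simp only: add_0_right)
next
  case (Suc k)
  have e: "seq x (n+k) = seq x (Suc (n+k)) mod 2^(n+k)" using seq_compat[of x] by blast
  have d: "(2::int)^n dvd 2^(n+k)" by (rule le_imp_power_dvd) simp
  have "seq x (n + Suc k) mod 2^n = seq x (Suc (n+k)) mod 2^n" by (simp only: add_Suc_right)
  also have "\<dots> = (seq x (Suc (n+k)) mod 2^(n+k)) mod 2^n"
    by (rule mod_mod_cancel[OF d, symmetric])
  also have "(seq x (Suc (n+k)) mod 2^(n+k)) mod 2^n = seq x (n+k) mod 2^n" by (simp only: e)
  also have "\<dots> = seq x n" by (rule Suc)
  finally show ?case .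
qed

lemma half:
  assumes "H x = 0" shows "\<exists>y. x = 2*y"
proof -
  have "(of_int (seq x 1) :: 2) = 0" using assms by (simp add: H_def)
  then have "2 dvd seq x 1" by (simp only: of_int_eq_0_iff_char_dvd) simp
  moreover have "seq x 1 mod 2 = seq x 1" using seq_mod[of x 1 0] by simp
  ultimately have x1: "seq x 1 = 0" by simp
  have ev: "seq x (Suc n) mod 2 = 0" for n using seq_mod[of x 1 n] x1 by simp
  define f where "f = (\<lambda>n. seq x (Suc n) div 2)"
  have fc: "\<forall>n. f n = f (Suc n) mod 2 ^ n"
  proof
    fix n
    let ?z = "seq x (Suc (Suc n))"
    have "?z mod (2 * 2^n) = 2 * (?z div 2 mod 2^n) + ?z mod 2" by (rule zmod_zmult2_eq) simp
    moreover have "?z mod 2^(Suc n) = seq x (Suc n)" using seq_mod[of x "Suc n" 1] by simp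
    ultimately have "seq x (Suc n) = 2 * (?z div 2 mod 2^n)" using ev[of "Suc n"] by simp
    then show "f n = f (Suc n) mod 2 ^ n" unfolding f_def by simp
  qed
  have sf: "seq (Padic2 f) = f" by (rule Padic2_inverse) (simp only: mem_Collect_eq, rule fc)
  have "x = Padic2 f + Padic2 f"
  proof (rule seq_inject[THEN iffD1], rule ext)
    fix n
    have "seq (Padic2 f + Padic2 f) n = (f n + f n) mod 2^n"
      by (simp only: plus_padic2.rep_eq sf)
    also have "\<dots> = seq x (Suc n) mod 2^n" unfolding f_def using ev[of n]
      by (metis add.commute dvd_mult_div_cancel mod_0_imp_dvd mult_2)
    also have "\<dots> = seq x n" using seq_mod[of x n 1] by simp
    finally show "seq x n = seq (Padic2 f + Padic2 f) n" by simp
  qed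
  then show ?thesis by (metis mult_2)
qed

definition wmul2 :: "2 \<times> 2 \<Rightarrow> 2 \<times> 2 \<Rightarrow> 2 \<times> 2" where
  "wmul2 p q = (case p of (a, b) \<Rightarrow> case q of (c, d) \<Rightarrow> (a*c + b*d, a*d + b*c + b*d))"
definition wsig2 :: "2 \<times> 2 \<Rightarrow> 2 \<times> 2" where
  "wsig2 p = (case p of (a, b) \<Rightarrow> (a + b, - b))"
definition mul2 :: "2 \<times> 2 \<times> 2 \<times> 2 \<Rightarrow> 2 \<times> 2 \<times> 2 \<times> 2 \<Rightarrow> 2 \<times> 2 \<times> 2 \<times> 2" where
  "mul2 x y = (case x of (xa, xb, xc, xd) \<Rightarrow> case y of (ya, yb, yc, yd) \<Rightarrow>
     (let p = wmul2 (xa, xb) (ya, yb); q = wmul2 (wsig2 (xc, xd)) (yc, yd);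
          u = wmul2 (wsig2 (xa, xb)) (yc, yd); v = wmul2 (xc, xd) (ya, yb)
      in (fst p + 2 * fst q, snd p + 2 * snd q, fst u + fst v, snd u + snd v)))"
definition add2 :: "2 \<times> 2 \<times> 2 \<times> 2 \<Rightarrow> 2 \<times> 2 \<times> 2 \<times> 2 \<Rightarrow> 2 \<times> 2 \<times> 2 \<times> 2" where
  "add2 x y = (case x of (xa, xb, xc, xd) \<Rightarrow> case y of (ya, yb, yc, yd) \<Rightarrow>
     (xa + ya, xb + yb, xc + yc, xd + yd))"
definition conj2 :: "2 \<times> 2 \<times> 2 \<times> 2 \<Rightarrow> 2 \<times> 2 \<times> 2 \<times> 2" where
  "conj2 x = (case x of (xa, xb, xc, xd) \<Rightarrow> (xa + xb, - xb, - xc, - xd))"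
definition HO :: "OD \<Rightarrow> 2 \<times> 2 \<times> 2 \<times> 2" where
  "HO x = (H (c1 x), H (cw x), H (ci x), H (ciw x))"

lemma HO_mult: "HO (x * y) = mul2 (HO x) (HO y)"
  by (simp only: HO_def mul2_def times_OD_def wmul_def wmul2_def wsig_def wsig2_def Let_def
      OD.sel prod.case fst_conv snd_conv H_add H_mult H_uminus H_numeral)
lemma HO_add: "HO (x + y) = add2 (HO x) (HO y)"
  by (simp add: HO_def add2_def plus_OD_def)
lemma HO_conj: "HO (qconj x) = conj2 (HO x)"
  by (simp add: HO_def conj2_def qconj_def)
lemma HO_scal: "HO (scal x) = (H x, 0, 0, 0)"
  by (simp add: HO_def scal_def)
lemma mul2_0: "mul2 (0,0,0,0) y = (0,0,0,0)"
  by (simp add: mul2_def wmul2_def wsig2_def Let_def split: prod.splits)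
lemma add2_0: "add2 x (0,0,0,0) = x"
  by (simp add: add2_def split: prod.splits)
lemma all2: "(\<forall>x::2. P x) \<longleftrightarrow> P 0 \<and> P 1"
  using ex2 by metis
lemma HO_T1: "HO (qj + qi * qj) = (1,0,1,0)"
  by (simp add: HO_mult HO_add) (simp add: HO_def qi_def qj_def mul2_def wmul2_def wsig2_def add2_def)
lemma HO_T2: "HO (qi + qj) = (1,0,1,0)"
  by (simp add: HO_add) (simp add: HO_def qi_def qj_def add2_def)

lemma fin: "\<forall>a b c d. mul2 (mul2 (a,b,c,d) (1,0,1,0)) (conj2 (a,b,c,d)) = (1,0,1,0) \<longrightarrow> 1 - a = 0 \<and> b = (0::2)"
  unfolding all2 by (simp add: mul2_def wmul2_def wsig2_def conj2_def Let_def)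

lemma key:
  fixes eps :: padic2 and lam r T :: OD and t :: nat
  assumes t: "t \<ge> 2" and hT: "HO T = (1,0,1,0)"
    and E: "T = r * T * qconj r + scal (eps * 2 ^ t) * lam * T * qconj lam"
  shows "\<exists>s :: OD. 1 - r = qi * s"
proof -
  have p: "(2::2) ^ t = 0" using t by (simp add: power_0_left)
  have hs: "HO (scal (eps * 2 ^ t)) = (0,0,0,0)"
    by (simp only: HO_scal H_mult H_pow H_numeral p mult_zero_right)
  have "HO T = HO (r * T * qconj r + scal (eps * 2 ^ t) * lam * T * qconj lam)"
    using E by (rule arg_cong)
  then have "mul2 (mul2 (HO r) (1,0,1,0)) (conj2 (HO r)) = (1,0,1,0)"
    by (simp only: HO_add HO_mult HO_conj hs mul2_0 add2_0 hT)
  then have "1 - H (c1 r) = 0 \<and> H (cw r) = 0"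
    using fin unfolding HO_def by blast
  then have h1: "H (1 - c1 r) = 0" and h2: "H (- cw r) = 0"
    by (simp_all only: H_minus H_uminus H_1 neg_0_equal_iff_equal) simp
  obtain a where a: "1 - c1 r = 2 * a" using half[OF h1] by blast
  obtain b where b: "- cw r = 2 * b" using half[OF h2] by blast
  have "1 - r = qi * OD (- ci r) (- ciw r) a b"
    using a b by (simp add: times_OD_def minus_OD_def one_OD_def qi_def wmul_def wsig_def Let_def)
  then show ?thesis by blast
qed

theorem lemma5p5:
  fixes eps :: padic2 and lam r :: OD and t :: nat
  assumes "unit2 eps" and "t \<ge> 2"
    and "qj + qi * qj = r * (qj + qi * qj) * qconj r
           + scal (eps * 2 ^ t) * lam * (qj + qi * qj) * qconj lam
         \<or> qi + qj = r * (qi + qj) * qconj r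
           + scal (eps * 2 ^ t) * lam * (qi + qj) * qconj lam"
  shows "\<exists>s :: OD. 1 - r = qi * s"
  using assms(3)
proof
  assume E: "qj + qi * qj = r * (qj + qi * qj) * qconj r
           + scal (eps * 2 ^ t) * lam * (qj + qi * qj) * qconj lam"
  show ?thesis by (rule key[OF assms(2) HO_T1 E])
next
  assume E: "qi + qj = r * (qi + qj) * qconj r
           + scal (eps * 2 ^ t) * lam * (qi + qj) * qconj lam"
  show ?thesis by (rule key[OF assms(2) HO_T2 E])
qed
end
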